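(* For every integer $m\ge 4$, $$\lambda(C_3(T_{m-2,2}))<\frac{m-2}{2}+\frac{32}{(m-3)^2}+\frac{16}{m-3}.$$
   Context: $\lambda(G)$ denotes the spectral radius of the adjacency matrix of $G$. $T_{p,2}$ is the complete bipartite graph on $p$ vertices with parts of sizes $\lfloor p/2\rfloor$ and $\lceil p/2\rceil$. $C_3(T_{m-2,2})$ is the $m$-vertex graph obtained by identifying one vertex of a triangle with one vertex of $T_{m-2,2}$ lying in the part of size $\lfloor (m-2)/2\rfloor$. *)

theory Defs
  imports Complex_Main "Jordan_Normal_Form.Spectral_Radius"
begin

text \<open>A simple graph on vertex set {0..<n} is given by a symmetric irreflexive
  edge predicate. Its adjacency matrix (over the complex numbers, so that the
  library notion of spectral radius applies):\<close>
definition adj_mat :: "nat \<Rightarrow> (nat \<Rightarrow> nat \<Rightarrow> bool) \<Rightarrow> complex mat" where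
  "adj_mat n E = mat n n (\<lambda>(i, j). if E i j then 1 else 0)"

definition graph_spectral_radius :: "nat \<Rightarrow> (nat \<Rightarrow> nat \<Rightarrow> bool) \<Rightarrow> real" where
  "graph_spectral_radius n E = spectral_radius (adj_mat n E)"

definition T2_edge :: "nat \<Rightarrow> nat \<Rightarrow> nat \<Rightarrow> bool" where
  "T2_edge p i j = ((i < p div 2 \<and> p div 2 \<le> j \<and> j < p) \<or> (j < p div 2 \<and> p div 2 \<le> i \<and> i < p))"

text \<open>C_3(T_{m-2,2}) on {0..<m}: the graph T_{m-2,2} on {0..<m-2}, plus a triangle
  on vertices 0, m-2, m-1, where vertex 0 lies in the part of size floor((m-2)/2).\<close>
definition C3T_edge :: "nat \<Rightarrow> nat \<Rightarrow> nat \<Rightarrow> bool" where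
  "C3T_edge m i j =
     (T2_edge (m - 2) i j
      \<or> (i = 0 \<and> (j = m - 2 \<or> j = m - 1))
      \<or> (j = 0 \<and> (i = m - 2 \<or> i = m - 1))
      \<or> (i = m - 2 \<and> j = m - 1) \<or> (i = m - 1 \<and> j = m - 2))"

end

theory Submission imports Defs begin

lemma r_ge:
  fixes p r :: real
  assumes p: "p \<ge> 2" and r: "r = p/2 + 8/(p-1)"
  shows "r \<ge> 9/2"
proof -
  have q: "p - 1 > 0" using p by simp
  have "r - 9/2 = (p-5)^2/(2*(p-1))" using q r by (simp add: field_simps power2_eq_square)
  moreover have "(p-5)^2/(2*(p-1)) \<ge> 0" using q by simp
  ultimately show ?thesis by simp
qed

lemma r_sq:
  fixes p r :: real
  assumes p: "p \<ge> 2" and r: "r = p/2 + 8/(p-1)"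
  shows "r^2 \<ge> p^2/4 + 8"
proof -
  have q: "p - 1 > 0" using p by simp
  have d: "8/(p-1) > 0" using q by simp
  have "8/(p-1) * (p-1) = 8" using q by (simp add: divide_simps)
  moreover have "(p-1) * (8/(p-1)) \<le> p * (8/(p-1))" using d by (intro mult_right_mono) auto
  ultimately have "p * (8/(p-1)) \<ge> 8" by (simp add: mult.commute)
  have "r^2 = p^2/4 + p * (8/(p-1)) + (8/(p-1))^2" unfolding r
    by (simp add: power2_eq_square algebra_simps)
  hence "r^2 \<ge> p^2/4 + p * (8/(p-1))" by (smt (verit) zero_le_power2)
  thus ?thesis using \<open>p * (8/(p-1)) \<ge> 8\<close> by simp
qed

lemma ineqs:
  fixes p a b r y z t :: real
  assumes p: "p \<ge> 2" and a: "a \<ge> 1" and b: "b = p - a" and ab: "a \<le> b" and ba: "b \<le> a + 1"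
    and r: "r = p/2 + 8/(p-1)"
    and y: "y = r / b" and z: "z = 1 + 4 / r^2" and t: "t = z / (r - 1)"
  shows "y > 0" "z > 0" "t > 0"
    "b * y + 2 * t \<le> r * z" "b * y \<le> r * 1" "z + (a - 1) \<le> r * y" "z + t \<le> r * t"
proof -
  have r9: "r \<ge> 9/2" by (rule r_ge[OF p r])
  have rs: "r^2 \<ge> p^2/4 + 8" by (rule r_sq[OF p r])
  have bpos: "b > 0" using a ab by simp
  show yp: "y > 0" using y r9 bpos by simp
  show zp: "z > 0" using z by (simp add: add_pos_nonneg)
  show tp: "t > 0" using t zp r9 by simp
  show "b * y \<le> r * 1" using y bpos by simp
  have by_: "b * y = r" using y bpos by simp
  show "z + t \<le> r * t"
  proof -
    have "(r - 1) * t = z" using t r9 by simp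
    thus ?thesis by (simp add: algebra_simps)
  qed
  show "b * y + 2 * t \<le> r * z"
  proof -
    have r1: "r - 1 > 0" using r9 by simp
    have "r * z = r + 4 / r" using z r9 by (simp add: field_simps power2_eq_square)
    moreover have "2 * t \<le> 4 / r"
    proof -
      have "r * r \<ge> 9/2 * (9/2)" using r9 by (intro mult_mono) auto
      hence "4 / r^2 \<le> 1" using r9 by (simp add: field_simps power2_eq_square)
      have "4 / r \<le> 1" using r9 by simp
      have "z * r = r + 4 / r" using z r9 by (simp add: field_simps power2_eq_square)
      have "8 / r \<le> 2" using r9 by (simp add: field_simps)
      have "2 * z * r = 2 * r + 8 / r" using \<open>z * r = r + 4 / r\<close> by (simp add: mult.assoc)
      hence "2 * z * r \<le> 4 * (r - 1)" using \<open>8 / r \<le> 2\<close> r9 by simp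
      hence "(2 * z * r) / (r * (r - 1)) \<le> (4 * (r - 1)) / (r * (r - 1))"
        using r1 r9 by (intro divide_right_mono) auto
      moreover have "(2 * z * r) / (r * (r - 1)) = 2 * t" unfolding t using r1 r9 by (simp add: field_simps)
      moreover have "(4 * (r - 1)) / (r * (r - 1)) = 4 / r" using r1 r9 by (simp add: field_simps)
      ultimately show ?thesis by simp
    qed
    ultimately show ?thesis using by_ by simp
  qed
  show "z + (a - 1) \<le> r * y"
  proof -
    have "p = a + b" using b by simp
    hence "p^2 - 4*a*b = (a-b)^2" by (simp add: power2_eq_square algebra_simps)
    hence "4 * a * b \<le> p^2" by (smt (verit) zero_le_power2)
    have r2: "r^2 > 0" using r9 by simp
    have "b * (4 / r^2) \<le> 8"
    proof -
      have "b \<le> p" using a b by simp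
      have "r^2 \<ge> 9/2 * (9/2)" using r9 unfolding power2_eq_square by (intro mult_mono) auto
      have "p^2 \<ge> 2 * p" using p by (simp add: power2_eq_square mult_right_mono)
      have "b * 4 \<le> 8 * r^2" using \<open>b \<le> p\<close> rs \<open>p^2 \<ge> 2 * p\<close> by linarith
      thus ?thesis using r2 by (simp add: field_simps)
    qed
    hence "b * (a + 4/r^2) \<le> r^2"
      using \<open>4 * a * b \<le> p^2\<close> rs by (simp add: algebra_simps)
    hence "a + 4/r^2 \<le> r^2 / b" using bpos by (simp add: field_simps)
    moreover have "r * y = r^2 / b" using y by (simp add: power2_eq_square)
    ultimately show ?thesis using z by simp
  qed
qed



lemma weight_bound:
  fixes n :: nat and E :: "nat \<Rightarrow> nat \<Rightarrow> bool" and x :: "nat \<Rightarrow> real" and rho :: real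
  assumes n: "n > 0" and xpos: "\<And>i. i < n \<Longrightarrow> x i > 0"
    and rows: "\<And>i. i < n \<Longrightarrow> (\<Sum>j\<in>{j. j < n \<and> E i j}. x j) \<le> rho * x i"
  shows "graph_spectral_radius n E \<le> rho"
proof -
  let ?A = "adj_mat n E"
  have A: "?A \<in> carrier_mat n n" unfolding adj_mat_def by auto
  from spectral_radius_mem_max(1)[OF A n] obtain k where
    sp: "k \<in> spectrum ?A" and eq: "spectral_radius ?A = norm k" by auto
  from sp obtain v where ev: "eigenvector ?A v k" unfolding spectrum_def eigenvalue_def by auto
  hence v: "v \<in> carrier_vec n" and vnz: "v \<noteq> 0\<^sub>v n" and Av: "?A *\<^sub>v v = k \<cdot>\<^sub>v v"
    unfolding eigenvector_def using A by auto
  define f where "f j = norm (v $ j) / x j" for j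
  obtain i where i: "i < n" and imax: "\<And>j. j < n \<Longrightarrow> f j \<le> f i"
  proof -
    have "finite (f ` {..<n})" "f ` {..<n} \<noteq> {}" using n by auto
    then have "Max (f ` {..<n}) \<in> f ` {..<n}" by (rule Max_in)
    then obtain i where "i < n" "f i = Max (f ` {..<n})" by auto
    then show ?thesis using that by (metis Max_ge \<open>finite (f ` {..<n})\<close> image_eqI lessThan_iff)
  qed
  obtain j0 where j0: "j0 < n" "v $ j0 \<noteq> 0"
    using vnz v by (metis eq_vecI carrier_vecD index_zero_vec(1) index_zero_vec(2))
  have "f j0 > 0" unfolding f_def using j0 xpos by auto
  hence fpos: "f i > 0" using imax[OF j0(1)] by auto
  have vi: "norm (v $ i) = f i * x i" unfolding f_def using xpos[OF i] by auto
  have "k * v $ i = (?A *\<^sub>v v) $ i" using Av i v by auto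
  also have "\<dots> = (\<Sum>j<n. ?A $$ (i,j) * v $ j)"
    using i v A by (auto simp: scalar_prod_def lessThan_atLeast0)
  also have "\<dots> = (\<Sum>j\<in>{j. j < n \<and> E i j}. v $ j)"
  proof -
    have e1: "(\<Sum>j<n. ?A $$ (i,j) * v $ j) = (\<Sum>j<n. if E i j then v $ j else 0)"
      using i unfolding adj_mat_def by (intro sum.cong) auto
    have e2: "(\<Sum>j<n. if E i j then v $ j else 0) = (\<Sum>j\<in>{j\<in>{..<n}. E i j}. v $ j)"
      by (rule sum.inter_filter[symmetric]) auto
    have e3: "{j\<in>{..<n}. E i j} = {j. j < n \<and> E i j}" by auto
    show ?thesis using e1 e2 e3 by simp
  qed
  finally have "norm k * norm (v $ i) = norm (\<Sum>j\<in>{j. j < n \<and> E i j}. v $ j)"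
    by (metis norm_mult)
  also have "\<dots> \<le> (\<Sum>j\<in>{j. j < n \<and> E i j}. norm (v $ j))" by (rule norm_sum)
  also have "\<dots> \<le> (\<Sum>j\<in>{j. j < n \<and> E i j}. f i * x j)"
  proof (rule sum_mono)
    fix j assume "j \<in> {j. j < n \<and> E i j}"
    hence "j < n" by auto
    thus "norm (v $ j) \<le> f i * x j" using imax[of j] xpos[of j] unfolding f_def
      by (simp add: divide_le_eq)
  qed
  also have "\<dots> = f i * (\<Sum>j\<in>{j. j < n \<and> E i j}. x j)" by (simp add: sum_distrib_left)
  also have "\<dots> \<le> f i * (rho * x i)" using rows[OF i] fpos by simp
  finally have "norm k * (f i * x i) \<le> rho * (f i * x i)" unfolding vi by (simp add: ac_simps)
  moreover have "f i * x i > 0" using fpos xpos[OF i] by simp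
  ultimately have "norm k \<le> rho" by (meson mult_le_cancel_right_pos)
  thus ?thesis unfolding graph_spectral_radius_def eq .
qed

theorem lemmaA3:
  fixes m :: nat
  assumes "m \<ge> 4"
  shows "graph_spectral_radius m (C3T_edge m)
           < (real m - 2) / 2 + 32 / (real m - 3)^2 + 16 / (real m - 3)"
proof -
  define p where "p = m - 2"
  define a where "a = p div 2"
  define r :: real where "r = real p/2 + 8/(real p - 1)"
  define y where "y = r / real (p - a)"
  define z where "z = 1 + 4/r^2"
  define t where "t = z/(r-1)"
  define x where "x j = (if j = 0 then z else if j < a then 1 else if j < p then y else t)" for j
  have p2: "p \<ge> 2" and mp: "m = p + 2" using assms unfolding p_def by auto
  have a1: "a \<ge> 1" "a < p" "a \<le> p - a" "p - a \<le> a + 1" using p2 unfolding a_def by auto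
  have rp: "real p \<ge> 2" using p2 by simp
  have ra: "real a \<ge> 1" using a1 by simp
  have rb: "real (p - a) = real p - real a" using a1 by simp
  have rab: "real a \<le> real (p - a)" using a1 by linarith
  have rba: "real (p - a) \<le> real a + 1" using a1 by linarith
  note I = ineqs[OF rp ra rb rab rba r_def y_def z_def t_def]
  have E: "C3T_edge m i j = (((i < a \<and> a \<le> j \<and> j < p) \<or> (j < a \<and> a \<le> i \<and> i < p))
      \<or> (i = 0 \<and> (j = p \<or> j = p + 1))
      \<or> (j = 0 \<and> (i = p \<or> i = p + 1))
      \<or> (i = p \<and> j = p + 1) \<or> (i = p + 1 \<and> j = p))" for i j
    unfolding C3T_edge_def T2_edge_def mp a_def by auto
  have sB: "(\<Sum>j\<in>{a..<p}. x j) = real (p - a) * y"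
  proof -
    have "(\<Sum>j\<in>{a..<p}. x j) = (\<Sum>j\<in>{a..<p}. y)" using a1 by (intro sum.cong) (auto simp: x_def)
    thus ?thesis by simp
  qed
  have sA: "(\<Sum>j\<in>{0..<a}. x j) = z + (real a - 1)"
  proof -
    have "(\<Sum>j\<in>{0..<a}. x j) = x 0 + (\<Sum>j\<in>{Suc 0..<a}. x j)" using a1 by (simp add: sum.atLeast_Suc_lessThan)
    also have "(\<Sum>j\<in>{Suc 0..<a}. x j) = (\<Sum>j\<in>{Suc 0..<a}. 1)" by (intro sum.cong) (auto simp: x_def)
    finally show ?thesis using a1 by (simp add: x_def of_nat_diff)
  qed
  have "graph_spectral_radius m (C3T_edge m) \<le> r"
  proof (rule weight_bound)
    show "m > 0" using mp by simp
    show "x i > 0" if "i < m" for i using I(1-3) unfolding x_def by auto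
    fix i assume i: "i < m"
    consider "i = 0" | "0 < i \<and> i < a" | "a \<le> i \<and> i < p" | "i = p" | "i = p + 1"
      using i mp by linarith
    then show "(\<Sum>j\<in>{j. j < m \<and> C3T_edge m i j}. x j) \<le> r * x i"
    proof cases
      case 1
      have N: "{j. j < m \<and> C3T_edge m i j} = {a..<p} \<union> {p, p+1}"
        using 1 a1 mp unfolding E by auto
      have "(\<Sum>j\<in>{a..<p} \<union> {p, p+1}. x j) = (\<Sum>j\<in>{a..<p}. x j) + (\<Sum>j\<in>{p, p+1}. x j)"
        by (rule sum.union_disjoint) auto
      also have "(\<Sum>j\<in>{p, p+1}. x j) = 2 * t" using a1 by (simp add: x_def)
      finally show ?thesis using N sB I(4) 1 by (simp add: x_def)
    next
      case 2
      have N: "{j. j < m \<and> C3T_edge m i j} = {a..<p}"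
        using 2 a1 mp unfolding E by auto
      show ?thesis using N sB I(5) 2 by (simp add: x_def)
    next
      case 3
      have N: "{j. j < m \<and> C3T_edge m i j} = {0..<a}"
        using 3 a1 mp unfolding E by auto
      show ?thesis using N sA I(6) 3 a1 by (simp add: x_def)
    next
      case 4
      have N: "{j. j < m \<and> C3T_edge m i j} = {0, p+1}"
        using 4 a1 mp unfolding E by auto
      show ?thesis using N I(7) 4 a1 by (simp add: x_def)
    next
      case 5
      have N: "{j. j < m \<and> C3T_edge m i j} = {0, p}"
        using 5 a1 mp unfolding E by auto
      show ?thesis using N I(7) 5 a1 by (simp add: x_def)
    qed
  qed
  moreover have "r < (real m - 2) / 2 + 32 / (real m - 3)^2 + 16 / (real m - 3)"
  proof -
    have e1: "real p - 1 = real m - 3" "real p / 2 = (real m - 2) / 2" using mp by auto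
    have pos: "real m - 3 > 0" using assms by simp
    have "8 / (real m - 3) < 16 / (real m - 3)" using pos by (simp add: divide_strict_right_mono)
    moreover have "32 / (real m - 3)^2 > 0" using pos by simp
    ultimately show ?thesis unfolding r_def e1 by linarith
  qed
  ultimately show ?thesis by linarith
qed

end
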